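(* Let $A,B,C$ be finite sets, let $\varphi(x,y)$ be a condensation FO formula over $A$, and let $f\colon A^{\mathrm{ord}+}\to B$ and $g\colon B^{\mathrm{ord}}\to C$ be FO-definable maps. Then the map $A^{\mathrm{ord}}\to C$ sending $u$ to $g(w_u)$, where $w_u\in B^{\mathrm{ord}}$ is the word with domain $\mathrm{dom}(\hat\varphi(u))$ whose letter at position $i$ is $f(\hat\varphi(u)_i)$, is FO-definable.
   Context: Countable ordinal words: for a set $\Sigma$, a countable ordinal word over $\Sigma$ is a map $w\colon\alpha\to\Sigma$ with $\alpha$ a countable ordinal (its domain $\mathrm{dom}(w)$); $\Sigma^{\mathrm{ord}}$ is the set of all of them, $\Sigma^{\mathrm{ord}+}$ the nonempty ones. First-order logic: over a finite alphabet $\Sigma$, FO formulas are built from atoms $x<y$ and $a(x)$ ($a\in\Sigma$) by Boolean connectives and quantification over positions, interpreted on countable ordinal words. A language is FO-definable if it is the set of words satisfying some FO sentence. For $L\subseteq\Sigma^{\mathrm{ord}}$ and a finite set $X$, a map $f\colon L\to X$ is FO-definable if every preimage $f^{-1}(x)$, $x\in X$, is an FO-definable language. Condensations: a condensation of a countable ordinal $\alpha$ is an equivalence relation on $\alpha$ with convex classes; the quotient is again a countable ordinal. A condensation formula is an FO formula $\varphi(x,y)$ such that for every word $w\in\Sigma^{\mathrm{ord}}$ the relation $\{(\iota,\kappa): w,[x\mapsto\iota,y\mapsto\kappa]\models\varphi\}$ is a condensation of $\mathrm{dom}(w)$. It induces $\hat\varphi\colon\Sigma^{\mathrm{ord}}\to(\Sigma^{\mathrm{ord}+})^{\mathrm{ord}}$: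 $\hat\varphi(u)$ has domain the ordered set of classes, and its letter at class $I$ is the subword $(u_\iota)_{\iota\in I}$. *)

theory Defs
  imports Main
begin

text \<open>Every countable ordinal is order-isomorphic to a
well-order on a subset of nat, so a countable ordinal word over alphabet 'a is
represented by a pair (r, w): r is a (reflexive) well-order on a set of naturals
(its field is the domain) and w gives the letter at each position of Field r.\<close>

type_synonym 'a word = "nat rel \<times> (nat \<Rightarrow> 'a)"

definition is_word :: "'a word \<Rightarrow> bool" where
  "is_word u \<longleftrightarrow> Well_order (fst u)"

definition dom_w :: "'a word \<Rightarrow> nat set" where
  "dom_w u = Field (fst u)"

definition words :: "'a word set" where
  "words = {u. is_word u}"

definition words_ne :: "'a word set" where
  "words_ne = {u. is_word u \<and> dom_w u \<noteq> {}}"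

datatype 'a fo =
    Less nat nat
  | Letter 'a nat
  | Neg "'a fo"
  | Conj "'a fo" "'a fo"
  | Ex nat "'a fo"

fun fv :: "'a fo \<Rightarrow> nat set" where
  "fv (Less x y) = {x, y}"
| "fv (Letter a x) = {x}"
| "fv (Neg \<phi>) = fv \<phi>"
| "fv (Conj \<phi> \<psi>) = fv \<phi> \<union> fv \<psi>"
| "fv (Ex v \<phi>) = fv \<phi> - {v}"

fun sat :: "'a word \<Rightarrow> (nat \<Rightarrow> nat) \<Rightarrow> 'a fo \<Rightarrow> bool" where
  "sat (r, w) \<sigma> (Less x y) = ((\<sigma> x, \<sigma> y) \<in> r \<and> \<sigma> x \<noteq> \<sigma> y)"
| "sat (r, w) \<sigma> (Letter a x) = (w (\<sigma> x) = a)"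
| "sat (r, w) \<sigma> (Neg \<phi>) = (\<not> sat (r, w) \<sigma> \<phi>)"
| "sat (r, w) \<sigma> (Conj \<phi> \<psi>) = (sat (r, w) \<sigma> \<phi> \<and> sat (r, w) \<sigma> \<psi>)"
| "sat (r, w) \<sigma> (Ex v \<phi>) = (\<exists>i\<in>Field r. sat (r, w) (\<sigma>(v := i)) \<phi>)"

definition fo_definable :: "'a word set \<Rightarrow> bool" where
  "fo_definable L \<longleftrightarrow> (\<exists>\<psi>. fv \<psi> = {} \<and> L = {u \<in> words. sat u (\<lambda>_. 0) \<psi>})"

definition fo_definable_map :: "'a word set \<Rightarrow> ('a word \<Rightarrow> 'x) \<Rightarrow> bool" where
  "fo_definable_map L f \<longleftrightarrow> (\<forall>x. fo_definable {u \<in> L. f u = x})"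

definition condensation :: "nat rel \<Rightarrow> nat rel \<Rightarrow> bool" where
  "condensation r E \<longleftrightarrow> equiv (Field r) E \<and>
     (\<forall>x y z. (x, y) \<in> E \<and> (x, z) \<in> r \<and> (z, y) \<in> r \<longrightarrow> (x, z) \<in> E)"

text \<open>Formula \<phi>(x,y) with x = variable 0, y = variable 1.\<close>

definition assign2 :: "nat \<Rightarrow> nat \<Rightarrow> nat \<Rightarrow> nat" where
  "assign2 i k = (\<lambda>v. if v = 0 then i else if v = 1 then k else i)"

definition fo_rel :: "'a fo \<Rightarrow> 'a word \<Rightarrow> nat rel" where
  "fo_rel \<phi> u = {(i, k). i \<in> dom_w u \<and> k \<in> dom_w u \<and> sat u (assign2 i k) \<phi>}"

definition condensation_formula :: "'a fo \<Rightarrow> bool" where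
  "condensation_formula \<phi> \<longleftrightarrow> fv \<phi> \<subseteq> {0, 1} \<and>
     (\<forall>u \<in> words. condensation (fst u) (fo_rel \<phi> u))"

text \<open>The induced map \<phi>-hat: the domain is the ordered set of classes, each class
being represented by its least element; the letter at a class is the subword
restricted to that class.\<close>

definition cls :: "'a fo \<Rightarrow> 'a word \<Rightarrow> nat \<Rightarrow> nat set" where
  "cls \<phi> u i = {k. (i, k) \<in> fo_rel \<phi> u}"

definition condense :: "'a fo \<Rightarrow> 'a word \<Rightarrow> ('a word) word" where
  "condense \<phi> u =
     (let M = {i \<in> dom_w u. \<forall>k \<in> cls \<phi> u i. (i, k) \<in> fst u}
      in (Restr (fst u) M, \<lambda>i. (Restr (fst u) (cls \<phi> u i), snd u)))"

definition map_word :: "('a \<Rightarrow> 'b) \<Rightarrow> 'a word \<Rightarrow> 'b word" where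
  "map_word f u = (fst u, f \<circ> snd u)"

end

theory Submission
  imports Defs
begin

fun vars :: "'a fo \<Rightarrow> nat set" where
  "vars (Less x y) = {x, y}"
| "vars (Letter a x) = {x}"
| "vars (Neg \<phi>) = vars \<phi>"
| "vars (Conj \<phi> \<psi>) = vars \<phi> \<union> vars \<psi>"
| "vars (Ex v \<phi>) = insert v (vars \<phi>)"

fun ren :: "(nat \<Rightarrow> nat) \<Rightarrow> 'a fo \<Rightarrow> 'a fo" where
  "ren \<rho> (Less x y) = Less (\<rho> x) (\<rho> y)"
| "ren \<rho> (Letter a x) = Letter a (\<rho> x)"
| "ren \<rho> (Neg \<phi>) = Neg (ren \<rho> \<phi>)"
| "ren \<rho> (Conj \<phi> \<psi>) = Conj (ren \<rho> \<phi>) (ren \<rho> \<psi>)"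
| "ren \<rho> (Ex v \<phi>) = Ex (\<rho> v) (ren \<rho> \<phi>)"

lemma fv_vars: "fv \<chi> \<subseteq> vars \<chi>"
  by (induction \<chi>) auto

lemma vars_ren: "vars (ren \<rho> \<chi>) = \<rho> ` vars \<chi>"
  by (induction \<chi>) auto

lemma fv_ren: "inj \<rho> \<Longrightarrow> fv (ren \<rho> \<chi>) = \<rho> ` fv \<chi>"
  by (induction \<chi>) (auto simp: inj_eq)

lemma sat_ren: "inj \<rho> \<Longrightarrow> sat (r, w) \<sigma> (ren \<rho> \<chi>) = sat (r, w) (\<sigma> \<circ> \<rho>) \<chi>"
proof (induction \<chi> arbitrary: \<sigma>)
  case (Ex v \<chi>)
  have "\<And>i. (\<sigma>(\<rho> v := i)) \<circ> \<rho> = (\<sigma> \<circ> \<rho>)(v := i)"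
    using Ex.prems by (auto simp: fun_eq_iff inj_eq)
  then have "\<And>i. sat (r, w) (\<sigma>(\<rho> v := i) \<circ> \<rho>) \<chi> = sat (r, w) ((\<sigma> \<circ> \<rho>)(v := i)) \<chi>" by simp
  then show ?case using Ex by (simp only: sat.simps ren.simps)
qed auto

lemma sat_cong: "(\<forall>x\<in>fv \<chi>. \<sigma> x = \<sigma>' x) \<Longrightarrow> sat (r, w) \<sigma> \<chi> = sat (r, w) \<sigma>' \<chi>"
proof (induction \<chi> arbitrary: \<sigma> \<sigma>')
  case (Ex v \<chi>)
  have "\<And>i. \<forall>x\<in>fv \<chi>. (\<sigma>(v := i)) x = (\<sigma>'(v := i)) x" using Ex.prems by auto
  then have "\<And>i. sat (r, w) (\<sigma>(v := i)) \<chi> = sat (r, w) (\<sigma>'(v := i)) \<chi>" using Ex.IH by blast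
  then show ?case by (simp del: fun_upd_apply)
next
  case (Conj \<chi>1 \<chi>2)
  have "sat (r, w) \<sigma> \<chi>1 = sat (r, w) \<sigma>' \<chi>1" by (rule Conj.IH(1)) (use Conj.prems in auto)
  moreover have "sat (r, w) \<sigma> \<chi>2 = sat (r, w) \<sigma>' \<chi>2" by (rule Conj.IH(2)) (use Conj.prems in auto)
  ultimately show ?case by simp
qed auto

fun Rel :: "(nat \<Rightarrow> 'a fo) \<Rightarrow> ('b \<Rightarrow> nat \<Rightarrow> 'a fo) \<Rightarrow> 'b fo \<Rightarrow> 'a fo" where
  "Rel G L (Less x y) = Less x y"
| "Rel G L (Letter b x) = L b x"
| "Rel G L (Neg \<chi>) = Neg (Rel G L \<chi>)"
| "Rel G L (Conj \<chi> \<psi>) = Conj (Rel G L \<chi>) (Rel G L \<psi>)"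
| "Rel G L (Ex v \<chi>) = Ex v (Conj (G v) (Rel G L \<chi>))"

lemma fv_Rel:
  assumes "\<And>v. fv (G v) \<subseteq> insert v Z" and "\<And>b x. fv (L b x) \<subseteq> insert x Z"
  shows "fv (Rel G L \<chi>) \<subseteq> fv \<chi> \<union> Z"
  using assms by (induction \<chi>) fastforce+

lemma sat_Rel:
  assumes refl: "refl_on (Field r) r" and S: "S \<subseteq> Field r"
    and z: "z \<notin> vars \<chi>"
    and G: "\<And>v \<sigma>. v \<in> vars \<chi> \<Longrightarrow> \<sigma> z = a \<Longrightarrow> \<sigma> v \<in> Field r \<Longrightarrow>
               sat (r, w) \<sigma> (G v) \<longleftrightarrow> \<sigma> v \<in> S"
    and L: "\<And>b x \<sigma>. x \<in> vars \<chi> \<Longrightarrow> \<sigma> z = a \<Longrightarrow> \<sigma> x \<in> S \<Longrightarrow>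
               sat (r, w) \<sigma> (L b x) \<longleftrightarrow> w' (\<sigma> x) = b"
    and \<sigma>: "\<sigma> z = a" "\<forall>x\<in>fv \<chi>. \<sigma> x \<in> S"
  shows "sat (Restr r S, w') \<sigma> \<chi> \<longleftrightarrow> sat (r, w) \<sigma> (Rel G L \<chi>)"
  using z G L \<sigma>
proof (induction \<chi> arbitrary: \<sigma>)
  case (Less x y)
  then show ?case using S by auto
next
  case (Letter b x)
  then show ?case by auto
next
  case (Neg \<chi>)
  then show ?case by auto
next
  case (Conj \<chi>1 \<chi>2)
  have 1: "sat (Restr r S, w') \<sigma> \<chi>1 \<longleftrightarrow> sat (r, w) \<sigma> (Rel G L \<chi>1)"
    by (rule Conj.IH(1)) (use Conj.prems in auto)
  have 2: "sat (Restr r S, w') \<sigma> \<chi>2 \<longleftrightarrow> sat (r, w) \<sigma> (Rel G L \<chi>2)"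
    by (rule Conj.IH(2)) (use Conj.prems in auto)
  show ?case using 1 2 by simp
next
  case (Ex v \<chi>)
  have F: "Field (Restr r S) = S" using refl S by (rule Refl_Field_Restr2)
  have vz: "v \<noteq> z" using Ex.prems by auto
  have IH: "sat (Restr r S, w') (\<sigma>(v:=i)) \<chi> \<longleftrightarrow> sat (r, w) (\<sigma>(v:=i)) (Rel G L \<chi>)" if "i \<in> S" for i
    by (rule Ex.IH) (use Ex.prems that vz in auto)
  have Gi: "sat (r, w) (\<sigma>(v:=i)) (G v) \<longleftrightarrow> i \<in> S" if "i \<in> Field r" for i
  proof -
    have "(\<sigma>(v:=i)) z = a" "(\<sigma>(v:=i)) v \<in> Field r" using vz Ex.prems(4) that by auto
    from Ex.prems(2)[OF _ this] show ?thesis by (simp add: fun_upd_def)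
  qed
  show ?case using F IH Gi S by (auto simp del: fun_upd_apply)
qed

definition eqf :: "nat \<Rightarrow> nat \<Rightarrow> 'a fo" where
  "eqf a b = Conj (Neg (Less a b)) (Neg (Less b a))"

definition phirel :: "'a fo \<Rightarrow> nat \<Rightarrow> nat \<Rightarrow> 'a fo" where
  "phirel \<phi> a b = Ex 0 (Conj (eqf 0 a) (Ex 1 (Conj (eqf 1 b) \<phi>)))"

definition isMin :: "'a fo \<Rightarrow> nat \<Rightarrow> 'a fo" where
  "isMin \<phi> v = Neg (Ex 2 (Conj (phirel \<phi> v 2) (Less 2 v)))"

definition Ltr :: "'a fo \<Rightarrow> ('b \<Rightarrow> 'a fo) \<Rightarrow> 'b \<Rightarrow> nat \<Rightarrow> 'a fo" where
  "Ltr \<phi> \<chi> b x = Ex 2 (Conj (eqf 2 x) (Rel (phirel \<phi> 2) (\<lambda>b x. Letter b x) (ren (\<lambda>n. n + 3) (\<chi> b))))"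

lemma fv_eqf: "fv (eqf a b) = {a, b}" by (auto simp: eqf_def)

lemma fv_phirel: "fv \<phi> \<subseteq> {0, 1} \<Longrightarrow> fv (phirel \<phi> a b) \<subseteq> {a, b}"
  by (auto simp: phirel_def fv_eqf)

lemma fv_isMin: "fv \<phi> \<subseteq> {0, 1} \<Longrightarrow> fv (isMin \<phi> v) \<subseteq> {v}"
  using fv_phirel[of \<phi> v 2] by (auto simp: isMin_def)

lemma fv_Ltr:
  assumes "fv \<phi> \<subseteq> {0, 1}" "fv (\<chi> b) = {}"
  shows "fv (Ltr \<phi> \<chi> b x) \<subseteq> {x}"
proof -
  have "fv (Rel (phirel \<phi> 2) (\<lambda>b x. Letter b x) (ren (\<lambda>n. n + 3) (\<chi> b)))
      \<subseteq> fv (ren (\<lambda>n. n + 3) (\<chi> b)) \<union> {2}"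
    by (rule fv_Rel) (use fv_phirel[OF assms(1)] in auto)
  moreover have "fv (ren (\<lambda>n. n + 3) (\<chi> b)) = {}"
    using assms(2) by (simp add: fv_ren inj_def)
  ultimately show ?thesis by (auto simp: Ltr_def fv_eqf)
qed

locale wctx =
  fixes r :: "nat rel" and w :: "nat \<Rightarrow> 'a" and \<phi> :: "'a fo"
  assumes wo: "Well_order r"
    and fvphi: "fv \<phi> \<subseteq> {0, 1}"
    and cond: "condensation r (fo_rel \<phi> (r, w))"
begin

abbreviation "E \<equiv> fo_rel \<phi> (r, w)"

lemma refl: "refl_on (Field r) r"
  using wo by (auto simp: well_order_on_def linear_order_on_def partial_order_on_def preorder_on_def)

lemma antis: "antisym r"
  using wo by (auto simp: well_order_on_def linear_order_on_def partial_order_on_def)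

lemma tot: "total_on (Field r) r"
  using wo by (auto simp: well_order_on_def linear_order_on_def)

lemma sat_eqf: "\<sigma> a \<in> Field r \<Longrightarrow> \<sigma> b \<in> Field r \<Longrightarrow> sat (r, w) \<sigma> (eqf a b) \<longleftrightarrow> \<sigma> a = \<sigma> b"
  using tot refl by (auto simp: eqf_def total_on_def refl_on_def)

lemma E_sub: "E \<subseteq> Field r \<times> Field r"
  by (auto simp: fo_rel_def dom_w_def)

lemma sat_phirel:
  assumes "a \<noteq> 0" "b \<noteq> 0" "b \<noteq> 1" "\<sigma> a \<in> Field r" "\<sigma> b \<in> Field r"
  shows "sat (r, w) \<sigma> (phirel \<phi> a b) \<longleftrightarrow> (\<sigma> a, \<sigma> b) \<in> E"
proof -
  have e1: "sat (r, w) (\<sigma>(0 := i)) (eqf 0 a) \<longleftrightarrow> i = \<sigma> a" if "i \<in> Field r" for i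
    using sat_eqf[of "\<sigma>(0 := i)" 0 a] assms that by simp
  have e2: "sat (r, w) (\<sigma>(0 := i, 1 := k)) (eqf 1 b) \<longleftrightarrow> k = \<sigma> b" if "k \<in> Field r" for i k
    using sat_eqf[of "\<sigma>(0 := i, 1 := k)" 1 b] assms that by simp
  have c: "sat (r, w) (\<sigma>(0 := i, 1 := k)) \<phi> = sat (r, w) (assign2 i k) \<phi>" for i k
    by (rule sat_cong) (use fvphi in \<open>auto simp: assign2_def\<close>)
  have "sat (r, w) \<sigma> (phirel \<phi> a b) \<longleftrightarrow>
     (\<exists>i\<in>Field r. sat (r, w) (\<sigma>(0 := i)) (eqf 0 a) \<and>
        (\<exists>k\<in>Field r. sat (r, w) (\<sigma>(0 := i, 1 := k)) (eqf 1 b) \<and> sat (r, w) (\<sigma>(0 := i, 1 := k)) \<phi>))"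
    by (simp add: phirel_def del: fun_upd_apply)
  also have "\<dots> \<longleftrightarrow> sat (r, w) (assign2 (\<sigma> a) (\<sigma> b)) \<phi>"
    using e1 e2 c assms by (auto simp del: fun_upd_apply)
  also have "\<dots> \<longleftrightarrow> (\<sigma> a, \<sigma> b) \<in> E"
    using assms by (simp add: fo_rel_def dom_w_def)
  finally show ?thesis .
qed

definition M :: "nat set" where
  "M = {i \<in> dom_w (r, w). \<forall>k \<in> cls \<phi> (r, w) i. (i, k) \<in> fst (r, w)}"

lemma sat_isMin:
  assumes "v \<noteq> 0" "v \<noteq> 1" "v \<noteq> 2" "\<sigma> v \<in> Field r"
  shows "sat (r, w) \<sigma> (isMin \<phi> v) \<longleftrightarrow> \<sigma> v \<in> M"
proof -
  have p: "sat (r, w) (\<sigma>(2 := k)) (phirel \<phi> v 2) \<longleftrightarrow> (\<sigma> v, k) \<in> E" if "k \<in> Field r" for k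
    using sat_phirel[of v 2 "\<sigma>(2 := k)"] assms that by simp
  have "sat (r, w) \<sigma> (isMin \<phi> v) \<longleftrightarrow> \<not> (\<exists>k\<in>Field r. (\<sigma> v, k) \<in> E \<and> (k, \<sigma> v) \<in> r \<and> k \<noteq> \<sigma> v)"
  proof -
    have "sat (r, w) \<sigma> (isMin \<phi> v) \<longleftrightarrow> \<not> (\<exists>k\<in>Field r. sat (r, w) (\<sigma>(2 := k)) (phirel \<phi> v 2) \<and>
        sat (r, w) (\<sigma>(2 := k)) (Less 2 v))"
      by (simp add: isMin_def del: fun_upd_apply sat.simps(1))
    moreover have "sat (r, w) (\<sigma>(2 := k)) (Less 2 v) \<longleftrightarrow> (k, \<sigma> v) \<in> r \<and> k \<noteq> \<sigma> v" for k
      using assms by simp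
    ultimately show ?thesis using p by (smt (verit))
  qed
  also have "\<dots> \<longleftrightarrow> \<sigma> v \<in> M"
  proof -
    have lr: "(i, k) \<in> r \<longleftrightarrow> \<not> ((k, i) \<in> r \<and> k \<noteq> i)" if "i \<in> Field r" "k \<in> Field r" for i k
      using that tot antis refl unfolding total_on_def antisym_def refl_on_def by metis
    have ef: "(\<sigma> v, k) \<in> E \<Longrightarrow> k \<in> Field r" for k using E_sub by blast
    show ?thesis unfolding M_def cls_def dom_w_def fst_conv
      using assms(4) lr[of "\<sigma> v"] ef by auto
  qed
  finally show ?thesis .
qed

lemma M_sub: "M \<subseteq> Field r" by (auto simp: M_def dom_w_def)

lemma cls_sub: "cls \<phi> (r, w) j \<subseteq> Field r" using E_sub by (auto simp: cls_def)

lemma sat_closed: "fv \<chi> = {} \<Longrightarrow> sat (r', w') \<sigma> (ren (\<lambda>n. n + 3) \<chi>) = sat (r', w') (\<lambda>_. 0) \<chi>"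
proof -
  assume "fv \<chi> = {}"
  have "sat (r', w') \<sigma> (ren (\<lambda>n. n + 3) \<chi>) = sat (r', w') (\<sigma> \<circ> (\<lambda>n. n + 3)) \<chi>"
    by (rule sat_ren) (simp add: inj_def)
  also have "\<dots> = sat (r', w') (\<lambda>_. 0) \<chi>" by (rule sat_cong) (use \<open>fv \<chi> = {}\<close> in simp)
  finally show ?thesis .
qed

lemma sat_Ltr:
  assumes x2: "x \<noteq> 2" and xM: "\<sigma> x \<in> M" and fvc: "fv (\<chi> b) = {}"
    and chi: "{u \<in> words_ne. f u = b} = {u \<in> words. sat u (\<lambda>_. 0) (\<chi> b)}"
  shows "sat (r, w) \<sigma> (Ltr \<phi> \<chi> b x) \<longleftrightarrow> f (Restr r (cls \<phi> (r, w) (\<sigma> x)), w) = b"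
proof -
  define j where "j = \<sigma> x"
  define C where "C = cls \<phi> (r, w) j"
  have jF: "j \<in> Field r" using xM M_sub j_def by auto
  let ?R = "Rel (phirel \<phi> 2) (\<lambda>b x. Letter b x) (ren (\<lambda>n. n + 3) (\<chi> b))"
  have e: "sat (r, w) (\<sigma>(2 := i)) (eqf 2 x) \<longleftrightarrow> i = j" if "i \<in> Field r" for i
    using sat_eqf[of "\<sigma>(2 := i)" 2 x] that jF x2 j_def by simp
  have "sat (r, w) \<sigma> (Ltr \<phi> \<chi> b x) \<longleftrightarrow> (\<exists>i\<in>Field r. sat (r, w) (\<sigma>(2 := i)) (eqf 2 x) \<and> sat (r, w) (\<sigma>(2 := i)) ?R)"
    by (simp add: Ltr_def del: fun_upd_apply)
  also have "\<dots> \<longleftrightarrow> sat (r, w) (\<sigma>(2 := j)) ?R"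
    using e jF by blast
  also have "\<dots> \<longleftrightarrow> sat (Restr r C, w) (\<sigma>(2 := j)) (ren (\<lambda>n. n + 3) (\<chi> b))"
  proof (rule sat_Rel[symmetric, where z = 2 and a = j])
    show "refl_on (Field r) r" by (rule refl)
    show "C \<subseteq> Field r" unfolding C_def by (rule cls_sub)
    show "2 \<notin> vars (ren (\<lambda>n. n + 3) (\<chi> b))" by (auto simp: vars_ren)
    show "sat (r, w) \<sigma>' (phirel \<phi> 2 v) \<longleftrightarrow> \<sigma>' v \<in> C"
      if "v \<in> vars (ren (\<lambda>n. n + 3) (\<chi> b))" "\<sigma>' 2 = j" "\<sigma>' v \<in> Field r" for v \<sigma>'
    proof -
      have "v \<ge> 3" using that(1) by (auto simp: vars_ren)
      then show ?thesis using sat_phirel[of 2 v \<sigma>'] that jF by (simp add: C_def cls_def)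
    qed
    show "sat (r, w) \<sigma>' (Letter b' x') \<longleftrightarrow> w (\<sigma>' x') = b'" for b' x' \<sigma>' by simp
    show "(\<sigma>(2 := j)) 2 = j" by simp
    show "\<forall>x\<in>fv (ren (\<lambda>n. n + 3) (\<chi> b)). (\<sigma>(2 := j)) x \<in> C"
      using fvc by (simp add: fv_ren inj_def)
  qed
  also have "\<dots> \<longleftrightarrow> sat (Restr r C, w) (\<lambda>_. 0) (\<chi> b)" using sat_closed fvc by blast
  also have "\<dots> \<longleftrightarrow> f (Restr r C, w) = b"
  proof -
    have jC: "j \<in> C" using cond jF unfolding condensation_def equiv_def refl_on_def C_def cls_def by blast
    have "Field (Restr r C) = C" using refl cls_sub C_def by (simp add: Refl_Field_Restr2)
    then have "(Restr r C, w) \<in> words_ne" "(Restr r C, w) \<in> words"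
      using jC Well_order_Restr[OF wo, of C] by (auto simp: words_ne_def words_def is_word_def dom_w_def)
    then show ?thesis using chi by blast
  qed
  finally show ?thesis by (simp add: C_def j_def)
qed

end

theorem lemma2p1:
  fixes \<phi> :: "('a::finite) fo"
    and f :: "'a word \<Rightarrow> ('b::finite)"
    and g :: "'b word \<Rightarrow> ('c::finite)"
  assumes "condensation_formula \<phi>"
    and "fo_definable_map words_ne f"
    and "fo_definable_map words g"
  shows "fo_definable_map words (\<lambda>u. g (map_word f (condense \<phi> u)))"
proof -
  have fvphi: "fv \<phi> \<subseteq> {0, 1}" and condall: "\<forall>u \<in> words. condensation (fst u) (fo_rel \<phi> u)"
    using assms(1) by (auto simp: condensation_formula_def)
  have "\<forall>b. \<exists>\<chi>. fv \<chi> = {} \<and> {u \<in> words_ne. f u = b} = {u \<in> words. sat u (\<lambda>_. 0) \<chi>}"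
    using assms(2) by (auto simp: fo_definable_map_def fo_definable_def)
  then obtain \<chi> where \<chi>0: "\<forall>b. fv (\<chi> b) = {} \<and> {u \<in> words_ne. f u = b} = {u \<in> words. sat u (\<lambda>_. 0) (\<chi> b)}"
    by (rule choice[THEN exE])
  then have \<chi>: "\<And>b. fv (\<chi> b) = {}"
    "\<And>b. {u \<in> words_ne. f u = b} = {u \<in> words. sat u (\<lambda>_. 0) (\<chi> b)}" by simp_all
  show ?thesis unfolding fo_definable_map_def
  proof
    fix c
    obtain \<psi> where \<psi>: "fv \<psi> = {}" "{u \<in> words. g u = c} = {u \<in> words. sat u (\<lambda>_. 0) \<psi>}"
      using assms(3) unfolding fo_definable_map_def fo_definable_def by blast
    define \<Theta> where "\<Theta> = Rel (isMin \<phi>) (Ltr \<phi> \<chi>) (ren (\<lambda>n. n + 3) \<psi>)"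
    have "fv \<Theta> \<subseteq> fv (ren (\<lambda>n. n + 3) \<psi>) \<union> {}"
      unfolding \<Theta>_def by (rule fv_Rel) (use fv_isMin[OF fvphi] fv_Ltr[of \<phi> \<chi>, OF fvphi \<chi>(1)] in auto)
    then have fvT: "fv \<Theta> = {}" using \<psi>(1) by (simp add: fv_ren inj_def)
    have "{u \<in> words. g (map_word f (condense \<phi> u)) = c} = {u \<in> words. sat u (\<lambda>_. 0) \<Theta>}"
    proof (rule Collect_cong, rule conj_cong[OF refl])
      fix u :: "'a word" assume uw: "u \<in> words"
      obtain r w where u: "u = (r, w)" by (cases u) simp
      have wo: "Well_order r" using uw u by (simp add: words_def is_word_def)
      have cd: "condensation r (fo_rel \<phi> (r, w))" using condall uw u by (metis fst_conv)
      interpret wctx r w \<phi>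
        by (rule wctx.intro[OF wo fvphi cd])
      define W where "W = map_word f (condense \<phi> u)"
      have W: "W = (Restr r M, f \<circ> (\<lambda>i. (Restr r (cls \<phi> (r, w) i), w)))"
        unfolding W_def u condense_def map_word_def M_def by (simp add: Let_def)
      have Ww: "W \<in> words" using W Well_order_Restr[OF wo] by (simp add: words_def is_word_def)
      have "W \<in> {u \<in> words. g u = c} \<longleftrightarrow> W \<in> {u \<in> words. sat u (\<lambda>_. 0) \<psi>}" by (simp only: \<psi>(2))
      then have "g W = c \<longleftrightarrow> sat W (\<lambda>_. 0) \<psi>" using Ww by simp
      also have "\<dots> \<longleftrightarrow> sat W (\<lambda>_. 0) (ren (\<lambda>n. n + 3) \<psi>)"
        using sat_closed[OF \<psi>(1)] W by simp
      also have "\<dots> \<longleftrightarrow> sat (r, w) (\<lambda>_. 0) \<Theta>"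
        unfolding W \<Theta>_def
      proof (rule sat_Rel[where z = 0 and a = 0])
        show "refl_on (Field r) r" by (rule refl)
        show "M \<subseteq> Field r" by (rule M_sub)
        show "0 \<notin> vars (ren (\<lambda>n. n + 3) \<psi>)" by (auto simp: vars_ren)
        show "sat (r, w) \<sigma> (isMin \<phi> v) \<longleftrightarrow> \<sigma> v \<in> M"
          if "v \<in> vars (ren (\<lambda>n. n + 3) \<psi>)" "\<sigma> 0 = 0" "\<sigma> v \<in> Field r" for v \<sigma>
        proof -
          have "v \<ge> 3" using that(1) by (auto simp: vars_ren)
          then show ?thesis using sat_isMin[of v \<sigma>] that by simp
        qed
        show "sat (r, w) \<sigma> (Ltr \<phi> \<chi> b x) \<longleftrightarrow> (f \<circ> (\<lambda>i. (Restr r (cls \<phi> (r, w) i), w))) (\<sigma> x) = b"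
          if "x \<in> vars (ren (\<lambda>n. n + 3) \<psi>)" "\<sigma> 0 = 0" "\<sigma> x \<in> M" for b x \<sigma>
        proof -
          have "x \<ge> 3" using that(1) by (auto simp: vars_ren)
          then show ?thesis using sat_Ltr[of x \<sigma> \<chi> b f, OF _ that(3) \<chi>(1) \<chi>(2)] by simp
        qed
        show "(\<lambda>_. 0::nat) 0 = 0" by simp
        show "\<forall>x\<in>fv (ren (\<lambda>n. n + 3) \<psi>). (\<lambda>_. 0) x \<in> M" using \<psi>(1) by (simp add: fv_ren inj_def)
      qed
      finally show "g (map_word f (condense \<phi> u)) = c \<longleftrightarrow> sat u (\<lambda>_. 0) \<Theta>"
        using W_def u by simp
    qed
    then show "fo_definable {u \<in> words. g (map_word f (condense \<phi> u)) = c}"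
      using fvT by (auto simp: fo_definable_def)
  qed
qed

end
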